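(* Let $\ell>1$, $c>0$, $\alpha_{acc}>0$, $0<R_{Sch}<R_{ID}$, and $A(t)=\frac{c}{\alpha_{acc}}\Big(\frac{t^{1-\ell}}{1-\ell}-\frac{1}{1-\ell}\Big)$ for $t\ge1$. Then there is $\varepsilon>0$ such that the function $r=r(t)$ given implicitly by $$R_{ID}-r-R_{Sch}\ln\Big(1-\frac{R_{ID}-r}{R_{ID}-R_{Sch}}\Big)=A(t)$$ (with $r(1)=R_{ID}$, i.e. $R_{ID}-r(t)\in[0,R_{ID}-R_{Sch})$) is well defined for all $t\in[1,\infty)$ and satisfies $r(t)\ge R_{Sch}+\varepsilon$ for all $t>1$.
   Context: This $r(t)$ describes the radial null geodesic $\frac{dr}{dt}=-\frac{c}{\alpha_{acc}}t^{-\ell}\big(1-\frac{R_{Sch}}{r}\big)$ starting at $R_{ID}$. *)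

theory Defs
  imports Complex_Main
begin

definition A_fun :: "real \<Rightarrow> real \<Rightarrow> real \<Rightarrow> real \<Rightarrow> real" where
  "A_fun l c alpha t = c / alpha * (t powr (1 - l) / (1 - l) - 1 / (1 - l))"

definition lhs_fun :: "real \<Rightarrow> real \<Rightarrow> real \<Rightarrow> real" where
  "lhs_fun RSch RID r = RID - r - RSch * ln (1 - (RID - r) / (RID - RSch))"

end

theory Submission
  imports Defs
begin

lemma A_bounds:
  fixes l c alpha t :: real
  assumes "l > 1" "c > 0" "alpha > 0" "t \<ge> 1"
  shows "0 \<le> A_fun l c alpha t" "A_fun l c alpha t < c / (alpha * (l - 1))"
proof -
  have p0: "0 < t powr (1 - l)" using assms by simp
  have p1: "t powr (1 - l) \<le> 1" using assms powr_mono[of "1 - l" 0 t] by simp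
  have eq: "A_fun l c alpha t = c / alpha * ((1 - t powr (1 - l)) / (l - 1))"
  proof -
    have "\<And>x::real. x / (1 - l) - 1 / (1 - l) = (1 - x) / (l - 1)"
    proof -
      fix x :: real
      have "x / (1 - l) - 1 / (1 - l) = (x - 1) / (1 - l)" by (simp add: diff_divide_distrib)
      also have "... = (1 - x) / (l - 1)"
        by (metis minus_diff_eq divide_minus_left divide_minus_right)
      finally show "x / (1 - l) - 1 / (1 - l) = (1 - x) / (l - 1)" .
    qed
    thus ?thesis unfolding A_fun_def by simp
  qed
  show "0 \<le> A_fun l c alpha t" unfolding eq using assms p1 by simp
  have "(1 - t powr (1 - l)) / (l - 1) < 1 / (l - 1)"
    using assms p0 by (simp add: divide_strict_right_mono)
  hence "c / alpha * ((1 - t powr (1 - l)) / (l - 1)) < c / alpha * (1 / (l - 1))"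
    using assms by (intro mult_strict_left_mono) auto
  thus "A_fun l c alpha t < c / (alpha * (l - 1))" unfolding eq by simp
qed

theorem lemma2p1:
  fixes l c alpha RSch RID :: real
  assumes "l > 1" and "c > 0" and "alpha > 0" and "0 < RSch" and "RSch < RID"
  shows "\<exists>\<epsilon>>0.
     (\<forall>t\<ge>1. \<exists>!r. 0 \<le> RID - r \<and> RID - r < RID - RSch \<and>
                   lhs_fun RSch RID r = A_fun l c alpha t) \<and>
     (\<forall>t>1. \<forall>r. 0 \<le> RID - r \<and> RID - r < RID - RSch \<and>
                   lhs_fun RSch RID r = A_fun l c alpha t \<longrightarrow> r \<ge> RSch + \<epsilon>)"
proof -
  define D where "D = RID - RSch"
  define M where "M = c / (alpha * (l - 1))"
  define e where "e = exp (- M / RSch)"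
  have D: "D > 0" using assms D_def by simp
  have M: "M > 0" using assms M_def by simp
  have e0: "0 < e" and e1: "e < 1" using M assms e_def by auto
  have De: "D * e > 0" using D e0 by simp
  have bound: "r \<ge> RSch + D * e" if "0 \<le> RID - r" "RID - r < D" "lhs_fun RSch RID r < M" for r
  proof (rule ccontr)
    assume "\<not> ?thesis"
    hence lt: "r < RSch + D * e" by simp
    have pos: "0 < 1 - (RID - r) / D" using that D by (simp add: field_simps)
    have q: "1 - (RID - r) / D = (r - RSch) / D" using D_def D by (simp add: field_simps)
    have "(r - RSch) / D < e" using lt D by (simp add: pos_divide_less_eq mult.commute)
    hence "1 - (RID - r) / D < e" using q by simp
    hence "ln (1 - (RID - r) / D) < ln e" using pos by simp
    hence "ln (1 - (RID - r) / D) < - M / RSch" using e_def by simp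
    hence "RSch * ln (1 - (RID - r) / D) < - M" using assms
      by (simp add: field_simps)
    hence "lhs_fun RSch RID r > M" unfolding lhs_fun_def D_def[symmetric] using that by simp
    thus False using that by simp
  qed
  have mono: "lhs_fun RSch RID r1 > lhs_fun RSch RID r2"
    if "r1 < r2" "RID - r1 < D" "r2 \<le> RID" for r1 r2
  proof -
    have p1: "0 < 1 - (RID - r1) / D" using that D by (simp add: field_simps)
    have "1 - (RID - r1) / D < 1 - (RID - r2) / D" using that D by (simp add: field_simps)
    hence "ln (1 - (RID - r1) / D) < ln (1 - (RID - r2) / D)" using p1 by simp
    hence "RSch * ln (1 - (RID - r1) / D) < RSch * ln (1 - (RID - r2) / D)" using assms by simp
    thus ?thesis unfolding lhs_fun_def D_def[symmetric] using that by simp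
  qed
  show ?thesis
  proof (intro exI[of _ "D * e"] conjI allI impI)
    show "D * e > 0" using D e0 by simp
  next
    fix t :: real assume t: "t \<ge> 1"
    note Ab = A_bounds[OF assms(1-3) t, folded M_def]
    define a where "a = RSch + D * e"
    have "D * e \<le> D" using D e1 by simp
    hence aR: "a \<le> RID" using a_def D_def by simp
    have ga: "lhs_fun RSch RID a = D * (1 - e) + M"
    proof -
      have "RID - a = D * (1 - e)" unfolding a_def D_def by (simp add: algebra_simps)
      hence "1 - (RID - a) / D = e" using D by simp
      hence "ln (1 - (RID - a) / D) = - M / RSch" using e_def by simp
      hence "RSch * ln (1 - (RID - a) / D) = - M" using assms by simp
      thus ?thesis unfolding lhs_fun_def D_def[symmetric] using \<open>RID - a = D * (1 - e)\<close>
        by simp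
    qed
    have gb: "lhs_fun RSch RID RID = 0" unfolding lhs_fun_def by simp
    have cont: "isCont (lhs_fun RSch RID) x" if "a \<le> x" "x \<le> RID" for x
    proof -
      have "RID - x < D" using that a_def D_def De by simp
      hence "0 < 1 - (RID - x) / D" using D by simp
      hence "isCont (\<lambda>r. RID - r - RSch * ln (1 - (RID - r) / D)) x"
        using D by (intro continuous_intros) auto
      thus ?thesis unfolding lhs_fun_def D_def by simp
    qed
    obtain r where r: "a \<le> r" "r \<le> RID" "lhs_fun RSch RID r = A_fun l c alpha t"
      using IVT2[of "lhs_fun RSch RID" RID "A_fun l c alpha t" a] gb ga Ab aR cont D e1
      by (smt (verit) mult_pos_pos)
    show "\<exists>!r. 0 \<le> RID - r \<and> RID - r < RID - RSch \<and> lhs_fun RSch RID r = A_fun l c alpha t"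
    proof (rule ex1I[of _ r])
      show "0 \<le> RID - r \<and> RID - r < RID - RSch \<and> lhs_fun RSch RID r = A_fun l c alpha t"
        using r a_def D_def De by linarith
    next
      fix r' assume h: "0 \<le> RID - r' \<and> RID - r' < RID - RSch \<and> lhs_fun RSch RID r' = A_fun l c alpha t"
      have r'a: "RID - r < D" using r a_def D_def De by linarith
      show "r' = r"
      proof (rule ccontr)
        assume "r' \<noteq> r"
        hence "r' < r \<or> r < r'" by auto
        thus False using mono[of r' r] mono[of r r'] h r r'a D_def by auto
      qed
    qed
  next
    fix t r :: real assume t: "t > 1"
      and h: "0 \<le> RID - r \<and> RID - r < RID - RSch \<and> lhs_fun RSch RID r = A_fun l c alpha t"
    note Ab = A_bounds[OF assms(1-3), of t, folded M_def]
    show "RSch + D * e \<le> r" using bound[of r] h Ab t D_def by auto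
  qed
qed

end
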